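(* Let $\epsilon>0$. Consider mechanisms $Q:\mathbb{R}\to\Delta(\mathbb{R})$ of the form $Qu=u+V$, where the noise $V$ is a real random variable with probability distribution $g\in\Delta(\mathbb{R})$ that does not depend on the input $u$, and suppose $Q$ is $\epsilon$-Lipschitz private with respect to the metric $|u-u'|$ on $\mathbb{R}$. Then $$\mathbb{E}\big(Qu-u\big)^2=\mathbb{E}_{V\sim g}V^2\;\ge\;\mathbb{E}_{V\sim l}V^2=\frac{2}{\epsilon^2},$$ where $l(v)=\frac{\epsilon}{2}e^{-\epsilon|v|}$ is the Laplace density; i.e. the Laplace mechanism (adding noise with density $l$), which is itself $\epsilon$-Lipschitz private, achieves the minimal mean-squared error for approximating the identity query $q(u)=u$ among all such mechanisms.
   Context: $\Delta(\mathcal{Y})$ denotes the set of probability measures on $\mathcal{Y}$ (with its Borel $\sigma$-algebra). For a normed/metric space $(\mathcal{U},\|\cdot\|)$ and a response set $\mathcal{Y}$, a mechanism $Q:\mathcal{U}\to\Delta(\mathcal{Y})$ is called $\epsilon$-Lipschitz (differentially) private if for all $u,u'\in\mathcal{U}$ and all measurable $\mathcal{S}\subseteq\mathcal{Y}$, $|\ln\mathbb{P}(Qu\in\mathcal{S})-\ln\mathbb{P}(Qu'\in\mathcal{S})|\le\epsilon\|u-u'\|$, equivalently $\mathbb{P}(Qu\in\mathcal{S})\le e^{\epsilon\|u-u'\|}\mathbb{P}(Qu'\in\mathcal{S})$ for all such $u,u',\mathcal{S}$. *)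

theory Defs
  imports "HOL-Probability.Probability"
begin

definition lipschitz_private ::
  "real \<Rightarrow> ('a::metric_space \<Rightarrow> 'b::topological_space measure) \<Rightarrow> bool" where
  "lipschitz_private eps Q \<longleftrightarrow>
     (\<forall>u u' S. S \<in> sets borel \<longrightarrow>
        measure (Q u) S \<le> exp (eps * dist u u') * measure (Q u') S)"

definition additive_mech :: "real measure \<Rightarrow> real \<Rightarrow> real measure" where
  "additive_mech g u = distr g borel (\<lambda>v. u + v)"

definition laplace :: "real \<Rightarrow> real measure" where
  "laplace eps = density lborel (\<lambda>v. ennreal (eps / 2 * exp (- eps * \<bar>v\<bar>)))"

end

theory Submission imports Defs begin

lemma lap_even:
  fixes eps :: real and f :: "real \<Rightarrow> ennreal"
  assumes eps: "eps > 0" and fm[measurable]: "f \<in> borel_measurable borel"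
    and even: "\<And>v. f (-v) = f v"
  shows "(\<integral>\<^sup>+ v. ennreal (eps / 2 * exp (- eps * \<bar>v\<bar>)) * f v \<partial>lborel)
       = (\<integral>\<^sup>+ v. ennreal (erlang_density 0 eps v) * f v \<partial>lborel)"
proof -
  let ?e = "erlang_density 0 eps"
  have "(\<integral>\<^sup>+ v. ennreal (eps / 2 * exp (- eps * \<bar>v\<bar>)) * f v \<partial>lborel)
     = (\<integral>\<^sup>+ v. ennreal (1/2) * (ennreal (?e v) * f v) + ennreal (1/2) * (ennreal (?e (-v)) * f v) \<partial>lborel)"
  proof (rule nn_integral_cong_AE)
    show "AE v in lborel. ennreal (eps / 2 * exp (- eps * \<bar>v\<bar>)) * f v =
      ennreal (1/2) * (ennreal (?e v) * f v) + ennreal (1/2) * (ennreal (?e (-v)) * f v)"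
      using AE_lborel_singleton[of 0]
    proof eventually_elim
      case (elim v)
      have "ennreal (eps / 2 * exp (- eps * \<bar>v\<bar>)) = ennreal (1/2) * ennreal (?e v) + ennreal (1/2) * ennreal (?e (-v))"
      proof -
        have r: "eps / 2 * exp (- eps * \<bar>v\<bar>) = (1/2) * ?e v + (1/2) * ?e (-v)"
          using elim by (auto simp: erlang_density_def)
        have n: "0 \<le> ?e v" "0 \<le> ?e (-v)" using eps by auto
        have a: "ennreal ((1/2) * ?e v + (1/2) * ?e (-v)) = ennreal ((1/2) * ?e v) + ennreal ((1/2) * ?e (-v))"
          using n by (intro ennreal_plus) auto
        have b: "ennreal ((1/2) * ?e v) = ennreal (1/2) * ennreal (?e v)"
          using n by (intro ennreal_mult) auto
        have c: "ennreal ((1/2) * ?e (-v)) = ennreal (1/2) * ennreal (?e (-v))"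
          using n by (intro ennreal_mult) auto
        show ?thesis unfolding r a b c ..
      qed
      then show ?case by (simp add: distrib_right mult.assoc)
    qed
  qed
  also have "\<dots> = ennreal (1/2) * (\<integral>\<^sup>+ v. ennreal (?e v) * f v \<partial>lborel) + ennreal (1/2) * (\<integral>\<^sup>+ v. ennreal (?e (-v)) * f v \<partial>lborel)"
    by (simp add: nn_integral_add nn_integral_cmult)
  also have "(\<integral>\<^sup>+ v. ennreal (?e (-v)) * f v \<partial>lborel) = (\<integral>\<^sup>+ v. ennreal (?e v) * f v \<partial>lborel)"
    using nn_integral_real_affine[of "\<lambda>v. ennreal (?e (-v)) * f v" "-1" 0]
    by (simp add: even)
  also have "ennreal (1/2) * (\<integral>\<^sup>+ v. ennreal (?e v) * f v \<partial>lborel) + ennreal (1/2) * (\<integral>\<^sup>+ v. ennreal (?e v) * f v \<partial>lborel)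
     = (ennreal (1/2) + ennreal (1/2)) * (\<integral>\<^sup>+ v. ennreal (?e v) * f v \<partial>lborel)"
    by (simp add: distrib_right)
  also have "ennreal (1/2) + ennreal (1/2) = 1"
    by (subst ennreal_plus[symmetric]) auto
  finally show ?thesis by simp
qed

lemma lap_moment:
  fixes eps :: real assumes eps: "eps > 0"
  shows "(\<integral>\<^sup>+ v. ennreal (v\<^sup>2) \<partial>laplace eps) = ennreal (2 / eps\<^sup>2)"
proof -
  have "(\<integral>\<^sup>+ v. ennreal (v\<^sup>2) \<partial>laplace eps) = (\<integral>\<^sup>+ v. ennreal (eps / 2 * exp (- eps * \<bar>v\<bar>)) * ennreal (v\<^sup>2) \<partial>lborel)"
    unfolding laplace_def by (subst nn_integral_density) auto
  also have "\<dots> = (\<integral>\<^sup>+ v. ennreal (erlang_density 0 eps v) * ennreal (v\<^sup>2) \<partial>lborel)"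
    by (rule lap_even[OF eps]) auto
  also have "\<dots> = (\<integral>\<^sup>+ v. ennreal (erlang_density 0 eps v * v ^ 2) \<partial>lborel)"
    using eps by (intro nn_integral_cong) (simp add: ennreal_mult)
  also have "\<dots> = ennreal (2 / eps\<^sup>2)"
    using nn_integral_erlang_ith_moment[OF eps, of 0 2] by simp
  finally show ?thesis .
qed

lemma lap_prob:
  fixes eps :: real assumes eps: "eps > 0"
  shows "prob_space (laplace eps)"
proof (rule prob_spaceI)
  have "emeasure (laplace eps) (space (laplace eps)) = (\<integral>\<^sup>+ v. ennreal (eps / 2 * exp (- eps * \<bar>v\<bar>)) * 1 \<partial>lborel)"
    unfolding laplace_def by (subst emeasure_density) (auto intro!: nn_integral_cong)
  also have "\<dots> = (\<integral>\<^sup>+ v. ennreal (erlang_density 0 eps v) * 1 \<partial>lborel)"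
    by (rule lap_even[OF eps]) auto
  also have "\<dots> = (\<integral>\<^sup>+ v. ennreal (erlang_density 0 eps v * v ^ 0) \<partial>lborel)"
    by simp
  also have "\<dots> = 1"
    using nn_integral_erlang_ith_moment[OF eps, of 0 0] by simp
  finally show "emeasure (laplace eps) (space (laplace eps)) = 1" .
qed

lemma lap_priv:
  fixes eps :: real assumes eps: "eps > 0"
  shows "lipschitz_private eps (additive_mech (laplace eps))"
  unfolding lipschitz_private_def
proof (intro allI impI)
  fix u u' :: real and S :: "real set"
  assume S[measurable]: "S \<in> sets borel"
  let ?h = "\<lambda>v. eps / 2 * exp (- eps * \<bar>v\<bar>)"
  interpret L: prob_space "laplace eps" by (rule lap_prob[OF eps])
  have sp: "space (laplace eps) = UNIV" by (simp add: laplace_def)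
  have meq: "measure (additive_mech (laplace eps) w) S = measure (laplace eps) {v. w + v \<in> S}" for w
    unfolding additive_mech_def
    by (subst measure_distr) (auto simp: laplace_def vimage_def)
  have eeq: "emeasure (laplace eps) {v. w + v \<in> S} = (\<integral>\<^sup>+ v. ennreal (?h v) * indicator S (w + v) \<partial>lborel)" for w
    unfolding laplace_def
    by (subst emeasure_density) (auto intro!: nn_integral_cong split: split_indicator)
  have "(\<integral>\<^sup>+ v. ennreal (?h v) * indicator S (u + v) \<partial>lborel)
      = (\<integral>\<^sup>+ v. ennreal (?h ((u' - u) + v)) * indicator S (u' + v) \<partial>lborel)"
    using nn_integral_real_affine[of "\<lambda>v. ennreal (?h v) * indicator S (u + v)" 1 "u' - u"]
    by simp
  also have "\<dots> \<le> (\<integral>\<^sup>+ v. ennreal (exp (eps * dist u u')) * (ennreal (?h v) * indicator S (u' + v)) \<partial>lborel)"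
  proof (intro nn_integral_mono)
    fix v :: real
    have "exp (- eps * \<bar>u' - u + v\<bar>) \<le> exp (eps * dist u u') * exp (- eps * \<bar>v\<bar>)"
    proof -
      have "- eps * \<bar>u' - u + v\<bar> \<le> eps * dist u u' + - eps * \<bar>v\<bar>"
      proof -
        have "\<bar>v\<bar> \<le> \<bar>u' - u + v\<bar> + dist u u'" by (simp add: dist_real_def)
        then have "eps * \<bar>v\<bar> \<le> eps * (\<bar>u' - u + v\<bar> + dist u u')" using eps by (intro mult_left_mono) auto
        then show ?thesis by (simp add: algebra_simps)
      qed
      then show ?thesis by (simp add: exp_add[symmetric])
    qed
    then have "?h (u' - u + v) \<le> exp (eps * dist u u') * ?h v"
      using eps by (simp add: mult_left_mono)
    then have "ennreal (?h (u' - u + v)) \<le> ennreal (exp (eps * dist u u')) * ennreal (?h v)"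
      using eps by (subst ennreal_mult[symmetric]) (auto intro: ennreal_leI)
    then show "ennreal (?h (u' - u + v)) * indicator S (u' + v) \<le> ennreal (exp (eps * dist u u')) * (ennreal (?h v) * indicator S (u' + v))"
      by (auto split: split_indicator simp: mult.assoc)
  qed
  also have "\<dots> = ennreal (exp (eps * dist u u')) * (\<integral>\<^sup>+ v. ennreal (?h v) * indicator S (u' + v) \<partial>lborel)"
    by (rule nn_integral_cmult) auto
  finally have "emeasure (laplace eps) {v. u + v \<in> S} \<le> ennreal (exp (eps * dist u u')) * emeasure (laplace eps) {v. u' + v \<in> S}"
    unfolding eeq .
  then have "ennreal (measure (laplace eps) {v. u + v \<in> S}) \<le> ennreal (exp (eps * dist u u') * measure (laplace eps) {v. u' + v \<in> S})"
    by (simp add: L.emeasure_eq_measure ennreal_mult[symmetric])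
  then show "measure (additive_mech (laplace eps) u) S \<le> exp (eps * dist u u') * measure (additive_mech (laplace eps) u') S"
    unfolding meq by (subst (asm) ennreal_le_iff) auto
qed

lemma tail_bound:
  fixes eps s :: real and g :: "real measure"
  assumes eps: "eps > 0" and s: "s > 0"
    and g_prob: "prob_space g" and g_sets: "sets g = sets borel"
    and priv: "lipschitz_private eps (additive_mech g)"
  shows "exp (- eps * s) \<le> measure g {v. s \<le> \<bar>v\<bar>}"
proof -
  interpret G: prob_space g by (rule g_prob)
  have sp: "space g = UNIV" using sets_eq_imp_space_eq[OF g_sets] by simp
  have ms: "A \<in> sets borel \<Longrightarrow> A \<in> sets g" for A using g_sets by simp
  have mf: "(\<lambda>v. w + v) \<in> measurable g borel" for w :: real
    by (subst measurable_cong_sets[OF g_sets refl]) simp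
  have meq: "measure (additive_mech g w) S = measure g {v. w + v \<in> S}" if "S \<in> sets borel" for w S
    unfolding additive_mech_def by (subst measure_distr[OF mf that]) (simp add: sp vimage_def)
  have s1: "{v::real. 0 \<le> v} \<in> sets g" "{v::real. v \<le> 0} \<in> sets g"
    "{v::real. s \<le> v} \<in> sets g" "{v::real. v \<le> -s} \<in> sets g"
    by (auto intro!: ms)
  have p: "\<And>u u' S. S \<in> sets borel \<Longrightarrow> measure g {v. u + v \<in> S} \<le> exp (eps * dist u u') * measure g {v. u' + v \<in> S}"
    using priv unfolding lipschitz_private_def by (simp add: meq)
  have 1: "measure g {v. 0 \<le> v} \<le> exp (eps * s) * measure g {v. s \<le> v}"
    using p[of "{0..}" 0 "-s"] s by (simp add: dist_real_def)
  have 2: "measure g {v. v \<le> 0} \<le> exp (eps * s) * measure g {v. v \<le> -s}"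
  proof -
    have e: "{v. s + v \<le> 0} = {v. v \<le> -s}" by auto
    show ?thesis using p[of "{..0}" 0 "s"] s by (simp add: dist_real_def e)
  qed
  have 3: "1 \<le> measure g {v. 0 \<le> v} + measure g {v. v \<le> 0}"
  proof -
    have u: "{v::real. 0 \<le> v} \<union> {v. v \<le> 0} = space g" unfolding sp by auto
    have "1 = measure g ({v. 0 \<le> v} \<union> {v. v \<le> 0})"
      unfolding u by (rule G.prob_space[symmetric])
    also have "\<dots> \<le> measure g {v. 0 \<le> v} + measure g {v. v \<le> 0}"
      by (rule measure_Un_le[OF s1(1,2)])
    finally show ?thesis .
  qed
  have 4: "measure g {v. s \<le> \<bar>v\<bar>} = measure g {v. s \<le> v} + measure g {v. v \<le> -s}"
  proof -
    have "{v. s \<le> \<bar>v\<bar>} = {v. s \<le> v} \<union> {v. v \<le> -s}" by auto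
    moreover have "{v. s \<le> v} \<inter> {v. v \<le> -s} = {}" using s by auto
    ultimately show ?thesis using G.finite_measure_Union[OF s1(3,4)] by metis
  qed
  have "1 \<le> exp (eps * s) * measure g {v. s \<le> \<bar>v\<bar>}"
    using 1 2 3 4 by (simp add: distrib_left)
  then have "exp (- eps * s) * 1 \<le> exp (- eps * s) * (exp (eps * s) * measure g {v. s \<le> \<bar>v\<bar>})"
    by (intro mult_left_mono) auto
  then show ?thesis by (simp add: mult.assoc[symmetric] exp_add[symmetric])
qed

lemma inner_sq:
  fixes v :: real
  shows "(\<integral>\<^sup>+ s. ennreal (if 0 \<le> s \<and> s \<le> \<bar>v\<bar> then 2 * s else 0) \<partial>lborel) = ennreal (v\<^sup>2)"
proof -
  have hb: "has_bochner_integral lborel (\<lambda>x. 2 * x * indicator {0 .. \<bar>v\<bar>} x) (\<bar>v\<bar>\<^sup>2 - 0\<^sup>2)"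
    by (rule has_bochner_integral_FTC_Icc_real) (auto intro!: derivative_eq_intros)
  have "(\<integral>\<^sup>+ s. ennreal (if 0 \<le> s \<and> s \<le> \<bar>v\<bar> then 2 * s else 0) \<partial>lborel)
      = (\<integral>\<^sup>+ s. ennreal (2 * s * indicator {0 .. \<bar>v\<bar>} s) \<partial>lborel)"
    by (intro nn_integral_cong) (auto split: split_indicator)
  also have "\<dots> = ennreal (integral\<^sup>L lborel (\<lambda>x. 2 * x * indicator {0 .. \<bar>v\<bar>} x))"
    using hb by (intro nn_integral_eq_integral) (auto simp: has_bochner_integral_iff split: split_indicator)
  also have "\<dots> = ennreal (v\<^sup>2)"
    using hb by (simp add: has_bochner_integral_iff)
  finally show ?thesis .
qed

lemma lower_bound:
  fixes eps :: real and g :: "real measure"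
  assumes eps: "eps > 0"
    and g_prob: "prob_space g" and g_sets: "sets g = sets borel"
    and priv: "lipschitz_private eps (additive_mech g)"
  shows "ennreal (2 / eps\<^sup>2) \<le> (\<integral>\<^sup>+ v. ennreal (v\<^sup>2) \<partial>g)"
proof -
  interpret G: prob_space g by (rule g_prob)
  interpret P: pair_sigma_finite g lborel
    by (intro pair_sigma_finite.intro G.sigma_finite_measure) (rule lborel.sigma_finite_measure_axioms)
  define f where "f v s = ennreal (if 0 \<le> s \<and> s \<le> \<bar>v\<bar> then 2 * s else 0)" for v s :: real
  have fm: "case_prod f \<in> borel_measurable (g \<Otimes>\<^sub>M lborel)"
  proof -
    have "case_prod f \<in> borel_measurable (borel \<Otimes>\<^sub>M borel)"
      unfolding f_def by measurable
    then show ?thesis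
      by (subst measurable_cong_sets[OF sets_pair_measure_cong[OF g_sets sets_lborel] refl])
  qed
  have "(\<integral>\<^sup>+ v. ennreal (v\<^sup>2) \<partial>g) = (\<integral>\<^sup>+ v. (\<integral>\<^sup>+ s. f v s \<partial>lborel) \<partial>g)"
    unfolding f_def by (simp add: inner_sq)
  also have "\<dots> = (\<integral>\<^sup>+ s. (\<integral>\<^sup>+ v. f v s \<partial>g) \<partial>lborel)"
    using P.Fubini'[OF fm] by simp
  also have "\<dots> \<ge> (\<integral>\<^sup>+ s. ennreal (2 / eps) * ennreal (erlang_density 0 eps s * s ^ 1) \<partial>lborel)"
  proof (intro nn_integral_mono)
    fix s :: real
    show "ennreal (2 / eps) * ennreal (erlang_density 0 eps s * s ^ 1) \<le> (\<integral>\<^sup>+ v. f v s \<partial>g)"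
    proof (cases "s > 0")
      case True
      have A: "{v. s \<le> \<bar>v\<bar>} \<in> sets g" using g_sets by simp
      have "(\<integral>\<^sup>+ v. f v s \<partial>g) = (\<integral>\<^sup>+ v. ennreal (2 * s) * indicator {v. s \<le> \<bar>v\<bar>} v \<partial>g)"
        using True by (intro nn_integral_cong) (auto simp: f_def split: split_indicator)
      also have "\<dots> = ennreal (2 * s) * emeasure g {v. s \<le> \<bar>v\<bar>}"
        using A by (simp add: nn_integral_cmult_indicator)
      also have "\<dots> = ennreal (2 * s * measure g {v. s \<le> \<bar>v\<bar>})"
        using True by (simp add: G.emeasure_eq_measure ennreal_mult)
      finally have eq: "(\<integral>\<^sup>+ v. f v s \<partial>g) = ennreal (2 * s * measure g {v. s \<le> \<bar>v\<bar>})" .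
      have tb: "exp (- eps * s) \<le> measure g {v. s \<le> \<bar>v\<bar>}"
        by (rule tail_bound[OF eps True g_prob g_sets priv])
      have "ennreal (2 / eps) * ennreal (erlang_density 0 eps s * s ^ 1) = ennreal (2 * s * exp (- eps * s))"
        using True eps by (simp add: erlang_density_def ennreal_mult[symmetric])
      also have "\<dots> \<le> ennreal (2 * s * measure g {v. s \<le> \<bar>v\<bar>})"
        using True tb by (intro ennreal_leI mult_left_mono) auto
      finally show ?thesis unfolding eq .
    next
      case False
      then have "erlang_density 0 eps s * s ^ 1 = 0" by (auto simp: erlang_density_def)
      then have "ennreal (2 / eps) * ennreal (erlang_density 0 eps s * s ^ 1) = 0" by (simp only: ennreal_0 mult_zero_right)
      then show ?thesis by (metis zero_le)
    qed
  qed
  also have "(\<integral>\<^sup>+ s. ennreal (2 / eps) * ennreal (erlang_density 0 eps s * s ^ 1) \<partial>lborel)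
     = ennreal (2 / eps) * ennreal (1 / eps)"
    using nn_integral_erlang_ith_moment[OF eps, of 0 1]
    by (subst nn_integral_cmult) auto
  also have "ennreal (2 / eps) * ennreal (1 / eps) = ennreal (2 / eps\<^sup>2)"
    using eps by (simp add: ennreal_mult[symmetric] power2_eq_square)
  finally show ?thesis .
qed

theorem theorem1:
  fixes eps :: real and g :: "real measure"
  assumes eps: "eps > 0"
    and g_prob: "prob_space g" and g_sets: "sets g = sets borel"
    and priv: "lipschitz_private eps (additive_mech g)"
  shows "(\<integral>\<^sup>+ v. ennreal (v\<^sup>2) \<partial>g) \<ge> (\<integral>\<^sup>+ v. ennreal (v\<^sup>2) \<partial>laplace eps)
    \<and> (\<integral>\<^sup>+ v. ennreal (v\<^sup>2) \<partial>laplace eps) = ennreal (2 / eps\<^sup>2)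
    \<and> prob_space (laplace eps)
    \<and> lipschitz_private eps (additive_mech (laplace eps))"
proof (intro conjI)
  show m: "(\<integral>\<^sup>+ v. ennreal (v\<^sup>2) \<partial>laplace eps) = ennreal (2 / eps\<^sup>2)"
    by (rule lap_moment[OF eps])
  show "(\<integral>\<^sup>+ v. ennreal (v\<^sup>2) \<partial>g) \<ge> (\<integral>\<^sup>+ v. ennreal (v\<^sup>2) \<partial>laplace eps)"
    unfolding m by (rule lower_bound[OF eps g_prob g_sets priv])
  show "prob_space (laplace eps)" by (rule lap_prob[OF eps])
  show "lipschitz_private eps (additive_mech (laplace eps))" by (rule lap_priv[OF eps])
qed

end
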